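(* Let $\Gamma$ be a group and let $\mathcal{S}=\mathcal{S}(\Pi,A,\xi)$ be a Gr-category of the type $(\Pi,A)$. (i) If $(\theta,F)$ is a factor set on $\Gamma$ with coefficients in $\mathcal{S}$, then there are group homomorphisms $\varphi:\Gamma\to\mathrm{Aut}\,\Pi$ and $f:\Gamma\to\mathrm{Aut}\,A$ such that, for every $\sigma\in\Gamma$, $F^\sigma(x)=\varphi(\sigma)(x)$ and $F^\sigma(x,a)=(\varphi(\sigma)(x),f(\sigma)(a))$ for all $x\in\Pi$, $a\in A$; and, setting $\sigma x=\varphi(\sigma)(x)$, $\sigma a=f(\sigma)(a)$, the $\Pi$-module $A$ becomes a $\Pi$-module $\Gamma$-equivariant, i.e. $\sigma(xa)=(\sigma x)(\sigma a)$ for all $\sigma\in\Gamma,x\in\Pi,a\in A$. (ii) If $(F^\sigma)_{\sigma\in\Gamma}$ is a family of monoidal autoequivalences of $\mathcal{S}$ and $(\theta^{\sigma,\tau}:F^\sigma F^\tau\to F^{\sigma\tau})_{\sigma,\tau\in\Gamma}$ is a family of isomorphisms of monoidal functors satisfying conditions (ii) and (iii) in the definition of a factor set, then condition (i) holds automatically, i.e. $F^1=\mathrm{id}_{\mathcal{S}}$ as a monoidal functor.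
   Context: Let $\Pi$ be a group and $A$ a left $\Pi$-module. A Gr-category of the type $(\Pi,A)$, $\mathcal{S}(\Pi,A,\xi)$, has as objects the elements of $\Pi$, only automorphisms as morphisms, $\mathrm{Aut}(x)=\{x\}\times A$, composition $(x,u)\circ(x,v)=(x,u+v)$, tensor product $x\otimes y=xy$, $(x,u)\otimes(y,v)=(xy,u+xv)$, associativity constraint $a_{x,y,z}=(xyz,\xi(x,y,z))$ for a normalized 3-cocycle $\xi\in Z^3(\Pi,A)$ (group cohomology), and strict unit constraints (unit object $1$). A monoidal functor is written $F=(F,\widetilde F,\widehat F)$ with $\widetilde F_{x,y}:F(x\otimes y)\to F(x)\otimes F(y)$ and $\widehat F:F(1)\to 1$. A factor set on $\Gamma$ with coefficients in a monoidal category $\mathcal{C}$ is a pair $(\theta,F)$: monoidal autoequivalences $F^\sigma:\mathcal{C}\to\mathcal{C}$ ($\sigma\in\Gamma$) and isomorphisms of monoidal functors $\theta^{\sigma,\tau}:F^\sigma F^\tau\to F^{\sigma\tau}$, such that (i) $F^1=\mathrm{id}_{\mathcal{C}}$; (ii) $\theta^{1,\sigma}=\mathrm{id}_{F^\sigma}=\theta^{\sigma,1}$; (iii) $\theta^{\sigma\tau,\gamma}\circ(\theta^{\sigma,\tau}F^\gamma)=\theta^{\sigma,\tau\gamma}\circ(F^\sigma\theta^{\tau,\gamma})$ for all $\sigma,\tau,\gamma\in\Gamma$. *)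

theory Defs
  imports "HOL-Algebra.Algebra" "HOL-Algebra.Bij"
begin

text \<open>The group Pi is a HOL-Algebra group P; the Pi-module A is a HOL-Algebra
commutative group (written multiplicatively: the paper's u + v is u \<otimes> v, 0 is \<one>);
the action of x on u is act x u.\<close>

definition pi_module ::
  "('p, 'm) monoid_scheme \<Rightarrow> ('a, 'n) monoid_scheme \<Rightarrow> ('p \<Rightarrow> 'a \<Rightarrow> 'a) \<Rightarrow> bool" where
  "pi_module P A act \<longleftrightarrow> group P \<and> comm_group A \<and>
     (\<forall>x\<in>carrier P. act x \<in> hom A A) \<and>
     (\<forall>u\<in>carrier A. act \<one>\<^bsub>P\<^esub> u = u) \<and>
     (\<forall>x\<in>carrier P. \<forall>y\<in>carrier P. \<forall>u\<in>carrier A.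
        act (x \<otimes>\<^bsub>P\<^esub> y) u = act x (act y u))"

definition normalized_3cocycle ::
  "('p, 'm) monoid_scheme \<Rightarrow> ('a, 'n) monoid_scheme \<Rightarrow> ('p \<Rightarrow> 'a \<Rightarrow> 'a)
   \<Rightarrow> ('p \<Rightarrow> 'p \<Rightarrow> 'p \<Rightarrow> 'a) \<Rightarrow> bool" where
  "normalized_3cocycle P A act \<xi> \<longleftrightarrow>
     (\<forall>x\<in>carrier P. \<forall>y\<in>carrier P. \<forall>z\<in>carrier P. \<xi> x y z \<in> carrier A) \<and>
     (\<forall>x\<in>carrier P. \<forall>y\<in>carrier P. \<forall>z\<in>carrier P. \<forall>t\<in>carrier P.
        act x (\<xi> y z t) \<otimes>\<^bsub>A\<^esub> \<xi> x (y \<otimes>\<^bsub>P\<^esub> z) t \<otimes>\<^bsub>A\<^esub> \<xi> x y z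
        = \<xi> (x \<otimes>\<^bsub>P\<^esub> y) z t \<otimes>\<^bsub>A\<^esub> \<xi> x y (z \<otimes>\<^bsub>P\<^esub> t)) \<and>
     (\<forall>x\<in>carrier P. \<forall>y\<in>carrier P.
        \<xi> \<one>\<^bsub>P\<^esub> x y = \<one>\<^bsub>A\<^esub> \<and> \<xi> x \<one>\<^bsub>P\<^esub> y = \<one>\<^bsub>A\<^esub> \<and> \<xi> x y \<one>\<^bsub>P\<^esub> = \<one>\<^bsub>A\<^esub>)"

definition Gr_category_type ::
  "('p, 'm) monoid_scheme \<Rightarrow> ('a, 'n) monoid_scheme \<Rightarrow> ('p \<Rightarrow> 'a \<Rightarrow> 'a)
   \<Rightarrow> ('p \<Rightarrow> 'p \<Rightarrow> 'p \<Rightarrow> 'a) \<Rightarrow> bool" where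
  "Gr_category_type P A act \<xi> \<longleftrightarrow> pi_module P A act \<and> normalized_3cocycle P A act \<xi>"

text \<open>Objects go to fobj x; the morphism (x,u)
  goes to (fobj x, fmor x u); ftil x y is the element of A such that
  F~_{x,y} = (F(xy), ftil x y) : F(xy) -> F(x)F(y) (forcing F(xy) = F(x)F(y), as S has only
  automorphisms); fhat is the element with F^ = (1, fhat) : F(1) -> 1 (forcing F(1) = 1).\<close>
record ('p, 'a) mfun =
  fobj :: "'p \<Rightarrow> 'p"
  fmor :: "'p \<Rightarrow> 'a \<Rightarrow> 'a"
  ftil :: "'p \<Rightarrow> 'p \<Rightarrow> 'a"
  fhat :: "'a"

text \<open>Composition in S: (x,u) o (x,v) = (x, u \<otimes> v);  tensor (x,u) (y,v) = (xy, u \<otimes> act x v);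
  associativity constraint a_{x,y,z} = (xyz, xi x y z) : x(yz) -> (xy)z; strict units.\<close>
definition monoidal_functor ::
  "('p, 'm) monoid_scheme \<Rightarrow> ('a, 'n) monoid_scheme \<Rightarrow> ('p \<Rightarrow> 'a \<Rightarrow> 'a)
   \<Rightarrow> ('p \<Rightarrow> 'p \<Rightarrow> 'p \<Rightarrow> 'a) \<Rightarrow> ('p, 'a) mfun \<Rightarrow> bool" where
  "monoidal_functor P A act \<xi> F \<longleftrightarrow>
     \<comment> \<open>functor\<close>
     (\<forall>x\<in>carrier P. fobj F x \<in> carrier P) \<and>
     (\<forall>x\<in>carrier P. \<forall>u\<in>carrier A. fmor F x u \<in> carrier A) \<and>
     (\<forall>x\<in>carrier P. fmor F x \<one>\<^bsub>A\<^esub> = \<one>\<^bsub>A\<^esub>) \<and>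
     (\<forall>x\<in>carrier P. \<forall>u\<in>carrier A. \<forall>v\<in>carrier A.
        fmor F x (u \<otimes>\<^bsub>A\<^esub> v) = fmor F x u \<otimes>\<^bsub>A\<^esub> fmor F x v) \<and>
     \<comment> \<open>F~ and F^ are morphisms of S\<close>
     (\<forall>x\<in>carrier P. \<forall>y\<in>carrier P.
        fobj F (x \<otimes>\<^bsub>P\<^esub> y) = fobj F x \<otimes>\<^bsub>P\<^esub> fobj F y \<and> ftil F x y \<in> carrier A) \<and>
     fobj F \<one>\<^bsub>P\<^esub> = \<one>\<^bsub>P\<^esub> \<and> fhat F \<in> carrier A \<and>
     \<comment> \<open>naturality of F~\<close>
     (\<forall>x\<in>carrier P. \<forall>y\<in>carrier P. \<forall>u\<in>carrier A. \<forall>v\<in>carrier A.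
        ftil F x y \<otimes>\<^bsub>A\<^esub> fmor F (x \<otimes>\<^bsub>P\<^esub> y) (u \<otimes>\<^bsub>A\<^esub> act x v)
        = (fmor F x u \<otimes>\<^bsub>A\<^esub> act (fobj F x) (fmor F y v)) \<otimes>\<^bsub>A\<^esub> ftil F x y) \<and>
     \<comment> \<open>compatibility with associativity constraints:
         (F~ (x) id) o F~ o F(a) = a o (id (x) F~) o F~\<close>
     (\<forall>x\<in>carrier P. \<forall>y\<in>carrier P. \<forall>z\<in>carrier P.
        (ftil F x y \<otimes>\<^bsub>A\<^esub> act (fobj F x \<otimes>\<^bsub>P\<^esub> fobj F y) \<one>\<^bsub>A\<^esub>)
          \<otimes>\<^bsub>A\<^esub> ftil F (x \<otimes>\<^bsub>P\<^esub> y) z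
          \<otimes>\<^bsub>A\<^esub> fmor F (x \<otimes>\<^bsub>P\<^esub> (y \<otimes>\<^bsub>P\<^esub> z)) (\<xi> x y z)
        = \<xi> (fobj F x) (fobj F y) (fobj F z)
          \<otimes>\<^bsub>A\<^esub> (\<one>\<^bsub>A\<^esub> \<otimes>\<^bsub>A\<^esub> act (fobj F x) (ftil F y z))
          \<otimes>\<^bsub>A\<^esub> ftil F x (y \<otimes>\<^bsub>P\<^esub> z)) \<and>
     \<comment> \<open>compatibility with the (strict) unit constraints:
         F(l_x) = l_{Fx} o (F^ (x) id) o F~_{1,x},  F(r_x) = r_{Fx} o (id (x) F^) o F~_{x,1}\<close>
     (\<forall>x\<in>carrier P.
        fmor F x \<one>\<^bsub>A\<^esub> = (fhat F \<otimes>\<^bsub>A\<^esub> act \<one>\<^bsub>P\<^esub> \<one>\<^bsub>A\<^esub>) \<otimes>\<^bsub>A\<^esub> ftil F \<one>\<^bsub>P\<^esub> x \<and>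
        fmor F x \<one>\<^bsub>A\<^esub> = (\<one>\<^bsub>A\<^esub> \<otimes>\<^bsub>A\<^esub> act (fobj F x) (fhat F)) \<otimes>\<^bsub>A\<^esub> ftil F x \<one>\<^bsub>P\<^esub>)"

text \<open>Since Hom(x,y) is empty for
  x \<noteq> y and {x} \<times> A for x = y, and objects are isomorphic iff equal, this means:
  bijective on objects and bijective on each automorphism group.\<close>
definition monoidal_autoequivalence ::
  "('p, 'm) monoid_scheme \<Rightarrow> ('a, 'n) monoid_scheme \<Rightarrow> ('p \<Rightarrow> 'a \<Rightarrow> 'a)
   \<Rightarrow> ('p \<Rightarrow> 'p \<Rightarrow> 'p \<Rightarrow> 'a) \<Rightarrow> ('p, 'a) mfun \<Rightarrow> bool" where
  "monoidal_autoequivalence P A act \<xi> F \<longleftrightarrow>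
     monoidal_functor P A act \<xi> F \<and>
     bij_betw (fobj F) (carrier P) (carrier P) \<and>
     (\<forall>x\<in>carrier P. bij_betw (fmor F x) (carrier A) (carrier A))"

definition mf_comp ::
  "('p, 'm) monoid_scheme \<Rightarrow> ('a, 'n) monoid_scheme \<Rightarrow> ('p, 'a) mfun \<Rightarrow> ('p, 'a) mfun \<Rightarrow> ('p, 'a) mfun" where
  "mf_comp P A F G =
     \<lparr> fobj = (\<lambda>x. fobj F (fobj G x)),
       fmor = (\<lambda>x u. fmor F (fobj G x) (fmor G x u)),
       ftil = (\<lambda>x y. ftil F (fobj G x) (fobj G y) \<otimes>\<^bsub>A\<^esub> fmor F (fobj G (x \<otimes>\<^bsub>P\<^esub> y)) (ftil G x y)),
       fhat = fhat F \<otimes>\<^bsub>A\<^esub> fmor F (fobj G \<one>\<^bsub>P\<^esub>) (fhat G) \<rparr>"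

definition mf_id :: "('a, 'n) monoid_scheme \<Rightarrow> ('p, 'a) mfun" where
  "mf_id A = \<lparr> fobj = (\<lambda>x. x), fmor = (\<lambda>x u. u), ftil = (\<lambda>x y. \<one>\<^bsub>A\<^esub>), fhat = \<one>\<^bsub>A\<^esub> \<rparr>"

definition mf_eq ::
  "('p, 'm) monoid_scheme \<Rightarrow> ('a, 'n) monoid_scheme \<Rightarrow> ('p, 'a) mfun \<Rightarrow> ('p, 'a) mfun \<Rightarrow> bool" where
  "mf_eq P A F G \<longleftrightarrow>
     (\<forall>x\<in>carrier P. fobj F x = fobj G x \<and> (\<forall>u\<in>carrier A. fmor F x u = fmor G x u)) \<and>
     (\<forall>x\<in>carrier P. \<forall>y\<in>carrier P. ftil F x y = ftil G x y) \<and>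
     fhat F = fhat G"

text \<open>Isomorphism of monoidal functors th : F -> G; component th_x = (F x, th x) : F x -> G x
  (forcing F x = G x). Every morphism of S is invertible, so any such natural
  transformation is an isomorphism.\<close>
definition monoidal_nat_iso ::
  "('p, 'm) monoid_scheme \<Rightarrow> ('a, 'n) monoid_scheme \<Rightarrow> ('p \<Rightarrow> 'a \<Rightarrow> 'a)
   \<Rightarrow> ('p, 'a) mfun \<Rightarrow> ('p, 'a) mfun \<Rightarrow> ('p \<Rightarrow> 'a) \<Rightarrow> bool" where
  "monoidal_nat_iso P A act F G th \<longleftrightarrow>
     (\<forall>x\<in>carrier P. fobj F x = fobj G x \<and> th x \<in> carrier A) \<and>
     \<comment> \<open>naturality: th_x o F(x,u) = G(x,u) o th_x\<close>
     (\<forall>x\<in>carrier P. \<forall>u\<in>carrier A. th x \<otimes>\<^bsub>A\<^esub> fmor F x u = fmor G x u \<otimes>\<^bsub>A\<^esub> th x) \<and>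
     \<comment> \<open>monoidal: G~_{x,y} o th_{xy} = (th_x (x) th_y) o F~_{x,y};  F^ = G^ o th_1\<close>
     (\<forall>x\<in>carrier P. \<forall>y\<in>carrier P.
        ftil G x y \<otimes>\<^bsub>A\<^esub> th (x \<otimes>\<^bsub>P\<^esub> y)
        = (th x \<otimes>\<^bsub>A\<^esub> act (fobj F x) (th y)) \<otimes>\<^bsub>A\<^esub> ftil F x y) \<and>
     fhat F = fhat G \<otimes>\<^bsub>A\<^esub> th \<one>\<^bsub>P\<^esub>"

definition factor_set_data ::
  "('g, 'k) monoid_scheme \<Rightarrow> ('p, 'm) monoid_scheme \<Rightarrow> ('a, 'n) monoid_scheme
   \<Rightarrow> ('p \<Rightarrow> 'a \<Rightarrow> 'a) \<Rightarrow> ('p \<Rightarrow> 'p \<Rightarrow> 'p \<Rightarrow> 'a)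
   \<Rightarrow> ('g \<Rightarrow> ('p, 'a) mfun) \<Rightarrow> ('g \<Rightarrow> 'g \<Rightarrow> 'p \<Rightarrow> 'a) \<Rightarrow> bool" where
  "factor_set_data G P A act \<xi> F th \<longleftrightarrow>
     (\<forall>\<sigma>\<in>carrier G. monoidal_autoequivalence P A act \<xi> (F \<sigma>)) \<and>
     (\<forall>\<sigma>\<in>carrier G. \<forall>\<tau>\<in>carrier G.
        monoidal_nat_iso P A act (mf_comp P A (F \<sigma>) (F \<tau>)) (F (\<sigma> \<otimes>\<^bsub>G\<^esub> \<tau>)) (th \<sigma> \<tau>))"

definition factor_cond_i ::
  "('g, 'k) monoid_scheme \<Rightarrow> ('p, 'm) monoid_scheme \<Rightarrow> ('a, 'n) monoid_scheme
   \<Rightarrow> ('g \<Rightarrow> ('p, 'a) mfun) \<Rightarrow> bool" where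
  "factor_cond_i G P A F \<longleftrightarrow> mf_eq P A (F \<one>\<^bsub>G\<^esub>) (mf_id A)"

definition factor_cond_ii ::
  "('g, 'k) monoid_scheme \<Rightarrow> ('p, 'm) monoid_scheme \<Rightarrow> ('a, 'n) monoid_scheme
   \<Rightarrow> ('g \<Rightarrow> ('p, 'a) mfun) \<Rightarrow> ('g \<Rightarrow> 'g \<Rightarrow> 'p \<Rightarrow> 'a) \<Rightarrow> bool" where
  "factor_cond_ii G P A F th \<longleftrightarrow>
     (\<forall>\<sigma>\<in>carrier G. \<forall>x\<in>carrier P.
        th \<one>\<^bsub>G\<^esub> \<sigma> x = \<one>\<^bsub>A\<^esub> \<and> th \<sigma> \<one>\<^bsub>G\<^esub> x = \<one>\<^bsub>A\<^esub>)"

text \<open>Condition (iii): th^{st,g} o (th^{s,t} F^g) = th^{s,tg} o (F^s th^{t,g}).\<close>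
definition factor_cond_iii ::
  "('g, 'k) monoid_scheme \<Rightarrow> ('p, 'm) monoid_scheme \<Rightarrow> ('a, 'n) monoid_scheme
   \<Rightarrow> ('g \<Rightarrow> ('p, 'a) mfun) \<Rightarrow> ('g \<Rightarrow> 'g \<Rightarrow> 'p \<Rightarrow> 'a) \<Rightarrow> bool" where
  "factor_cond_iii G P A F th \<longleftrightarrow>
     (\<forall>\<sigma>\<in>carrier G. \<forall>\<tau>\<in>carrier G. \<forall>\<gamma>\<in>carrier G. \<forall>x\<in>carrier P.
        th (\<sigma> \<otimes>\<^bsub>G\<^esub> \<tau>) \<gamma> x \<otimes>\<^bsub>A\<^esub> th \<sigma> \<tau> (fobj (F \<gamma>) x)
        = th \<sigma> (\<tau> \<otimes>\<^bsub>G\<^esub> \<gamma>) x \<otimes>\<^bsub>A\<^esub> fmor (F \<sigma>) (fobj (F \<tau>) (fobj (F \<gamma>) x)) (th \<tau> \<gamma> x))"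

definition factor_set ::
  "('g, 'k) monoid_scheme \<Rightarrow> ('p, 'm) monoid_scheme \<Rightarrow> ('a, 'n) monoid_scheme
   \<Rightarrow> ('p \<Rightarrow> 'a \<Rightarrow> 'a) \<Rightarrow> ('p \<Rightarrow> 'p \<Rightarrow> 'p \<Rightarrow> 'a)
   \<Rightarrow> ('g \<Rightarrow> ('p, 'a) mfun) \<Rightarrow> ('g \<Rightarrow> 'g \<Rightarrow> 'p \<Rightarrow> 'a) \<Rightarrow> bool" where
  "factor_set G P A act \<xi> F th \<longleftrightarrow>
     factor_set_data G P A act \<xi> F th \<and> factor_cond_i G P A F \<and>
     factor_cond_ii G P A F th \<and> factor_cond_iii G P A F th"

end

theory Submission imports Defs begin

lemma partii:
  assumes A: "comm_group A" and P: "group P"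
    and act1: "\<forall>x\<in>carrier P. act x \<one>\<^bsub>A\<^esub> = \<one>\<^bsub>A\<^esub>"
    and ae: "monoidal_autoequivalence P A act \<xi> F1"
    and iso: "monoidal_nat_iso P A act (mf_comp P A F1 F1) F1 th"
    and th1: "\<forall>x\<in>carrier P. th x = \<one>\<^bsub>A\<^esub>"
  shows "mf_eq P A F1 (mf_id A)"
proof -
  interpret A: comm_group A by (rule A)
  interpret P: group P by (rule P)
  have mf: "monoidal_functor P A act \<xi> F1" and bo: "bij_betw (fobj F1) (carrier P) (carrier P)"
    and bm: "\<forall>x\<in>carrier P. bij_betw (fmor F1 x) (carrier A) (carrier A)"
    using ae by (auto simp: monoidal_autoequivalence_def)
  have oc: "\<And>x. x \<in> carrier P \<Longrightarrow> fobj F1 x \<in> carrier P"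
   and mc: "\<And>x u. x \<in> carrier P \<Longrightarrow> u \<in> carrier A \<Longrightarrow> fmor F1 x u \<in> carrier A"
   and tc: "\<And>x y. x \<in> carrier P \<Longrightarrow> y \<in> carrier P \<Longrightarrow> ftil F1 x y \<in> carrier A"
   and hc: "fhat F1 \<in> carrier A"
   and om: "\<And>x y. x \<in> carrier P \<Longrightarrow> y \<in> carrier P \<Longrightarrow> fobj F1 (x \<otimes>\<^bsub>P\<^esub> y) = fobj F1 x \<otimes>\<^bsub>P\<^esub> fobj F1 y"
   and o1: "fobj F1 \<one>\<^bsub>P\<^esub> = \<one>\<^bsub>P\<^esub>"
    using mf by (auto simp: monoidal_functor_def)
  have ob: "\<And>x. x \<in> carrier P \<Longrightarrow> fobj F1 (fobj F1 x) = fobj F1 x"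
    using iso by (auto simp: monoidal_nat_iso_def mf_comp_def)
  have obj: "\<And>x. x \<in> carrier P \<Longrightarrow> fobj F1 x = x"
    using ob oc bo by (metis bij_betw_def inj_on_def)
  have mb: "\<And>x u. x \<in> carrier P \<Longrightarrow> u \<in> carrier A \<Longrightarrow> fmor F1 x (fmor F1 x u) = fmor F1 x u"
  proof -
    fix x u assume x: "x \<in> carrier P" and u: "u \<in> carrier A"
    have "th x \<otimes>\<^bsub>A\<^esub> fmor (mf_comp P A F1 F1) x u = fmor F1 x u \<otimes>\<^bsub>A\<^esub> th x"
      using iso x u by (auto simp: monoidal_nat_iso_def)
    then show "fmor F1 x (fmor F1 x u) = fmor F1 x u"
      using th1 x u mc obj by (simp add: mf_comp_def)
  qed
  have mor: "\<And>x u. x \<in> carrier P \<Longrightarrow> u \<in> carrier A \<Longrightarrow> fmor F1 x u = u"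
    using mb mc bm by (metis bij_betw_def inj_on_def)
  have til: "\<And>x y. x \<in> carrier P \<Longrightarrow> y \<in> carrier P \<Longrightarrow> ftil F1 x y = \<one>\<^bsub>A\<^esub>"
  proof -
    fix x y assume x: "x \<in> carrier P" and y: "y \<in> carrier P"
    have "ftil F1 x y \<otimes>\<^bsub>A\<^esub> th (x \<otimes>\<^bsub>P\<^esub> y)
        = (th x \<otimes>\<^bsub>A\<^esub> act (fobj (mf_comp P A F1 F1) x) (th y)) \<otimes>\<^bsub>A\<^esub> ftil (mf_comp P A F1 F1) x y"
      using iso x y by (auto simp: monoidal_nat_iso_def)
    then have "ftil F1 x y = ftil F1 x y \<otimes>\<^bsub>A\<^esub> ftil F1 x y"
      using th1 x y obj mor tc act1 by (simp add: mf_comp_def)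
    then show "ftil F1 x y = \<one>\<^bsub>A\<^esub>" using tc x y by simp
  qed
  have hat: "fhat F1 = \<one>\<^bsub>A\<^esub>"
  proof -
    have "fhat (mf_comp P A F1 F1) = fhat F1 \<otimes>\<^bsub>A\<^esub> th \<one>\<^bsub>P\<^esub>"
      using iso by (auto simp: monoidal_nat_iso_def)
    then have "fhat F1 \<otimes>\<^bsub>A\<^esub> fhat F1 = fhat F1"
      using th1 o1 mor hc by (simp add: mf_comp_def)
    then show ?thesis using hc by simp
  qed
  show ?thesis using obj mor til hat by (simp add: mf_eq_def mf_id_def)
qed

lemma mor_const:
  assumes A: "comm_group A" and P: "group P"
    and acth: "\<forall>x\<in>carrier P. act x \<in> hom A A"
    and mf: "monoidal_functor P A act \<xi> F"
    and x: "x \<in> carrier P" and u: "u \<in> carrier A"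
  shows "fmor F x u = fmor F \<one>\<^bsub>P\<^esub> u"
    and "fmor F x (act x u) = act (fobj F x) (fmor F \<one>\<^bsub>P\<^esub> u)"
proof -
  interpret A: comm_group A by (rule A)
  interpret P: group P by (rule P)
  have act1: "\<And>x. x \<in> carrier P \<Longrightarrow> act x \<one>\<^bsub>A\<^esub> = \<one>\<^bsub>A\<^esub>"
    using acth hom_one A.is_group by blast
  have actc: "\<And>x u. x \<in> carrier P \<Longrightarrow> u \<in> carrier A \<Longrightarrow> act x u \<in> carrier A"
    using acth by (auto simp: hom_def)
  have oc: "\<And>x. x \<in> carrier P \<Longrightarrow> fobj F x \<in> carrier P"
   and mc: "\<And>x u. x \<in> carrier P \<Longrightarrow> u \<in> carrier A \<Longrightarrow> fmor F x u \<in> carrier A"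
   and m1: "\<And>x. x \<in> carrier P \<Longrightarrow> fmor F x \<one>\<^bsub>A\<^esub> = \<one>\<^bsub>A\<^esub>"
   and tc: "\<And>x y. x \<in> carrier P \<Longrightarrow> y \<in> carrier P \<Longrightarrow> ftil F x y \<in> carrier A"
   and nat: "\<And>x y u v. x \<in> carrier P \<Longrightarrow> y \<in> carrier P \<Longrightarrow> u \<in> carrier A \<Longrightarrow> v \<in> carrier A \<Longrightarrow>
        ftil F x y \<otimes>\<^bsub>A\<^esub> fmor F (x \<otimes>\<^bsub>P\<^esub> y) (u \<otimes>\<^bsub>A\<^esub> act x v)
        = (fmor F x u \<otimes>\<^bsub>A\<^esub> act (fobj F x) (fmor F y v)) \<otimes>\<^bsub>A\<^esub> ftil F x y"
    using mf by (auto simp: monoidal_functor_def)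
  have nat2: "\<And>x y u v. x \<in> carrier P \<Longrightarrow> y \<in> carrier P \<Longrightarrow> u \<in> carrier A \<Longrightarrow> v \<in> carrier A \<Longrightarrow>
        fmor F (x \<otimes>\<^bsub>P\<^esub> y) (u \<otimes>\<^bsub>A\<^esub> act x v)
        = fmor F x u \<otimes>\<^bsub>A\<^esub> act (fobj F x) (fmor F y v)"
  proof -
    fix x y u v assume h: "x \<in> carrier P" "y \<in> carrier P" "u \<in> carrier A" "v \<in> carrier A"
    have "ftil F x y \<otimes>\<^bsub>A\<^esub> fmor F (x \<otimes>\<^bsub>P\<^esub> y) (u \<otimes>\<^bsub>A\<^esub> act x v)
        = ftil F x y \<otimes>\<^bsub>A\<^esub> (fmor F x u \<otimes>\<^bsub>A\<^esub> act (fobj F x) (fmor F y v))"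
    proof -
      have R: "fmor F x u \<otimes>\<^bsub>A\<^esub> act (fobj F x) (fmor F y v) \<in> carrier A"
        using h mc actc oc by simp
      show ?thesis using nat[OF h] A.m_comm[OF R tc[OF h(1,2)]] by simp
    qed
    then show "fmor F (x \<otimes>\<^bsub>P\<^esub> y) (u \<otimes>\<^bsub>A\<^esub> act x v)
        = fmor F x u \<otimes>\<^bsub>A\<^esub> act (fobj F x) (fmor F y v)"
      proof (rule A.l_cancel)
      show "ftil F x y \<in> carrier A" using tc h by simp
      show "fmor F (x \<otimes>\<^bsub>P\<^esub> y) (u \<otimes>\<^bsub>A\<^esub> act x v) \<in> carrier A" using h mc actc by simp
      show "fmor F x u \<otimes>\<^bsub>A\<^esub> act (fobj F x) (fmor F y v) \<in> carrier A" using h mc actc oc by simp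
    qed
  qed
  show "fmor F x u = fmor F \<one>\<^bsub>P\<^esub> u"
    using nat2[of "\<one>\<^bsub>P\<^esub>" x u "\<one>\<^bsub>A\<^esub>"] x u act1 m1 oc mc by simp
  show "fmor F x (act x u) = act (fobj F x) (fmor F \<one>\<^bsub>P\<^esub> u)"
    using nat2[of x "\<one>\<^bsub>P\<^esub>" "\<one>\<^bsub>A\<^esub>" u] x u act1 m1 oc mc actc by simp
qed

lemma hom_AutoGroupI:
  assumes G: "group G"
    and au: "\<forall>\<sigma>\<in>carrier G. h \<sigma> \<in> auto M"
    and mu: "\<forall>\<sigma>\<in>carrier G. \<forall>\<tau>\<in>carrier G. \<forall>x\<in>carrier M. h (\<sigma> \<otimes>\<^bsub>G\<^esub> \<tau>) x = h \<sigma> (h \<tau> x)"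
  shows "h \<in> hom G (AutoGroup M)"
proof -
  have "h (\<sigma> \<otimes>\<^bsub>G\<^esub> \<tau>) = h \<sigma> \<otimes>\<^bsub>AutoGroup M\<^esub> h \<tau>"
    if s: "\<sigma> \<in> carrier G" and t: "\<tau> \<in> carrier G" for \<sigma> \<tau>
  proof -
    have st: "\<sigma> \<otimes>\<^bsub>G\<^esub> \<tau> \<in> carrier G" using G s t by (simp add: group.subgroup_self subgroup.m_closed)
    have B: "h \<sigma> \<in> Bij (carrier M)" "h \<tau> \<in> Bij (carrier M)" "h (\<sigma> \<otimes>\<^bsub>G\<^esub> \<tau>) \<in> Bij (carrier M)"
      using au s t st by (auto simp: auto_def)
    have "h \<sigma> \<otimes>\<^bsub>AutoGroup M\<^esub> h \<tau> = compose (carrier M) (h \<sigma>) (h \<tau>)"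
      using B by (simp add: AutoGroup_def BijGroup_def)
    also have "\<dots> = h (\<sigma> \<otimes>\<^bsub>G\<^esub> \<tau>)"
    proof (rule extensionalityI[of _ "carrier M"])
      show "compose (carrier M) (h \<sigma>) (h \<tau>) \<in> extensional (carrier M)" by (simp add: compose_def)
      show "h (\<sigma> \<otimes>\<^bsub>G\<^esub> \<tau>) \<in> extensional (carrier M)" using B by (simp add: Bij_def)
      fix x assume "x \<in> carrier M"
      then show "compose (carrier M) (h \<sigma>) (h \<tau>) x = h (\<sigma> \<otimes>\<^bsub>G\<^esub> \<tau>) x"
        using mu s t by (simp add: compose_def)
    qed
    finally show ?thesis by simp
  qed
  then show ?thesis using au by (auto simp: hom_def AutoGroup_def)
qed

theorem theorem2p3:
  fixes G :: "('g, 'k) monoid_scheme" and P :: "('p, 'm) monoid_scheme"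
    and A :: "('a, 'n) monoid_scheme"
    and act :: "'p \<Rightarrow> 'a \<Rightarrow> 'a" and \<xi> :: "'p \<Rightarrow> 'p \<Rightarrow> 'p \<Rightarrow> 'a"
    and F :: "'g \<Rightarrow> ('p, 'a) mfun" and th :: "'g \<Rightarrow> 'g \<Rightarrow> 'p \<Rightarrow> 'a"
  assumes "group G" and "Gr_category_type P A act \<xi>"
  shows "(factor_set G P A act \<xi> F th \<longrightarrow>
           (\<exists>\<phi> f. \<phi> \<in> hom G (AutoGroup P) \<and> f \<in> hom G (AutoGroup A) \<and>
              (\<forall>\<sigma>\<in>carrier G. \<forall>x\<in>carrier P.
                 fobj (F \<sigma>) x = \<phi> \<sigma> x \<and> (\<forall>a\<in>carrier A. fmor (F \<sigma>) x a = f \<sigma> a)) \<and>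
              (\<forall>\<sigma>\<in>carrier G. \<forall>x\<in>carrier P. \<forall>a\<in>carrier A.
                 f \<sigma> (act x a) = act (\<phi> \<sigma> x) (f \<sigma> a))))
       \<and> (factor_set_data G P A act \<xi> F th \<and> factor_cond_ii G P A F th \<and>
           factor_cond_iii G P A F th \<longrightarrow> factor_cond_i G P A F)"
proof -
  interpret G: group G by (rule assms(1))
  have pm: "pi_module P A act" using assms(2) by (simp add: Gr_category_type_def)
  have P: "group P" and A: "comm_group A" and acth: "\<forall>x\<in>carrier P. act x \<in> hom A A"
    and actone: "\<forall>u\<in>carrier A. act \<one>\<^bsub>P\<^esub> u = u"
    using pm by (auto simp: pi_module_def)
  interpret P: group P by (rule P)
  interpret A: comm_group A by (rule A)
  have act1: "\<forall>x\<in>carrier P. act x \<one>\<^bsub>A\<^esub> = \<one>\<^bsub>A\<^esub>"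
    using acth hom_one A.is_group by blast
  have actc: "\<And>x u. x \<in> carrier P \<Longrightarrow> u \<in> carrier A \<Longrightarrow> act x u \<in> carrier A"
    using acth by (auto simp: hom_def)
  have partI: "\<exists>\<phi> f. \<phi> \<in> hom G (AutoGroup P) \<and> f \<in> hom G (AutoGroup A) \<and>
              (\<forall>\<sigma>\<in>carrier G. \<forall>x\<in>carrier P.
                 fobj (F \<sigma>) x = \<phi> \<sigma> x \<and> (\<forall>a\<in>carrier A. fmor (F \<sigma>) x a = f \<sigma> a)) \<and>
              (\<forall>\<sigma>\<in>carrier G. \<forall>x\<in>carrier P. \<forall>a\<in>carrier A.
                 f \<sigma> (act x a) = act (\<phi> \<sigma> x) (f \<sigma> a))"
    if fs: "factor_set_data G P A act \<xi> F th"
  proof -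
    have ae: "\<And>\<sigma>. \<sigma> \<in> carrier G \<Longrightarrow> monoidal_autoequivalence P A act \<xi> (F \<sigma>)"
      and iso: "\<And>\<sigma> \<tau>. \<sigma> \<in> carrier G \<Longrightarrow> \<tau> \<in> carrier G \<Longrightarrow>
         monoidal_nat_iso P A act (mf_comp P A (F \<sigma>) (F \<tau>)) (F (\<sigma> \<otimes>\<^bsub>G\<^esub> \<tau>)) (th \<sigma> \<tau>)"
      using fs by (auto simp: factor_set_data_def)
    have mf: "\<And>\<sigma>. \<sigma> \<in> carrier G \<Longrightarrow> monoidal_functor P A act \<xi> (F \<sigma>)"
      using ae by (simp add: monoidal_autoequivalence_def)
    have bo: "\<And>\<sigma>. \<sigma> \<in> carrier G \<Longrightarrow> bij_betw (fobj (F \<sigma>)) (carrier P) (carrier P)"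
      and bm: "\<And>\<sigma> x. \<sigma> \<in> carrier G \<Longrightarrow> x \<in> carrier P \<Longrightarrow> bij_betw (fmor (F \<sigma>) x) (carrier A) (carrier A)"
      using ae by (auto simp: monoidal_autoequivalence_def)
    have oc: "\<And>\<sigma> x. \<sigma> \<in> carrier G \<Longrightarrow> x \<in> carrier P \<Longrightarrow> fobj (F \<sigma>) x \<in> carrier P"
     and mc: "\<And>\<sigma> x u. \<sigma> \<in> carrier G \<Longrightarrow> x \<in> carrier P \<Longrightarrow> u \<in> carrier A \<Longrightarrow> fmor (F \<sigma>) x u \<in> carrier A"
     and mm: "\<And>\<sigma> x u v. \<sigma> \<in> carrier G \<Longrightarrow> x \<in> carrier P \<Longrightarrow> u \<in> carrier A \<Longrightarrow> v \<in> carrier A \<Longrightarrow>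
        fmor (F \<sigma>) x (u \<otimes>\<^bsub>A\<^esub> v) = fmor (F \<sigma>) x u \<otimes>\<^bsub>A\<^esub> fmor (F \<sigma>) x v"
     and om: "\<And>\<sigma> x y. \<sigma> \<in> carrier G \<Longrightarrow> x \<in> carrier P \<Longrightarrow> y \<in> carrier P \<Longrightarrow>
        fobj (F \<sigma>) (x \<otimes>\<^bsub>P\<^esub> y) = fobj (F \<sigma>) x \<otimes>\<^bsub>P\<^esub> fobj (F \<sigma>) y"
     and o1: "\<And>\<sigma>. \<sigma> \<in> carrier G \<Longrightarrow> fobj (F \<sigma>) \<one>\<^bsub>P\<^esub> = \<one>\<^bsub>P\<^esub>"
      subgoal for \<sigma> x using mf[of \<sigma>] unfolding monoidal_functor_def by blast
      subgoal for \<sigma> x u using mf[of \<sigma>] unfolding monoidal_functor_def by blast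
      subgoal for \<sigma> x u v using mf[of \<sigma>] unfolding monoidal_functor_def by blast
      subgoal for \<sigma> x y using mf[of \<sigma>] unfolding monoidal_functor_def by blast
      subgoal for \<sigma> using mf[of \<sigma>] unfolding monoidal_functor_def by blast
      done
    define \<phi> where "\<phi> = (\<lambda>\<sigma>. restrict (fobj (F \<sigma>)) (carrier P))"
    define f where "f = (\<lambda>\<sigma>. restrict (fmor (F \<sigma>) \<one>\<^bsub>P\<^esub>) (carrier A))"
    have phiaut: "\<forall>\<sigma>\<in>carrier G. \<phi> \<sigma> \<in> auto P"
    proof
      fix \<sigma> assume s: "\<sigma> \<in> carrier G"
      have "\<phi> \<sigma> \<in> hom P P" using oc[OF s] om[OF s] by (simp add: \<phi>_def hom_def Pi_def)
      moreover have "bij_betw (\<phi> \<sigma>) (carrier P) (carrier P)"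
        using bo[OF s] by (simp add: \<phi>_def bij_betw_def inj_on_def)
      ultimately show "\<phi> \<sigma> \<in> auto P" by (simp add: auto_def Bij_def \<phi>_def)
    qed
    have faut: "\<forall>\<sigma>\<in>carrier G. f \<sigma> \<in> auto A"
    proof
      fix \<sigma> assume s: "\<sigma> \<in> carrier G"
      have "f \<sigma> \<in> hom A A" using mc[OF s P.one_closed] mm[OF s P.one_closed] by (simp add: f_def hom_def Pi_def)
      moreover have "bij_betw (f \<sigma>) (carrier A) (carrier A)"
        using bm[OF s P.one_closed] by (simp add: f_def bij_betw_def inj_on_def)
      ultimately show "f \<sigma> \<in> auto A" by (simp add: auto_def Bij_def f_def)
    qed
    have phimu: "\<forall>\<sigma>\<in>carrier G. \<forall>\<tau>\<in>carrier G. \<forall>x\<in>carrier P. \<phi> (\<sigma> \<otimes>\<^bsub>G\<^esub> \<tau>) x = \<phi> \<sigma> (\<phi> \<tau> x)"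
    proof (intro ballI)
      fix \<sigma> \<tau> x assume s: "\<sigma> \<in> carrier G" and t: "\<tau> \<in> carrier G" and x: "x \<in> carrier P"
      have "fobj (F \<sigma>) (fobj (F \<tau>) x) = fobj (F (\<sigma> \<otimes>\<^bsub>G\<^esub> \<tau>)) x"
        using iso[OF s t] x by (auto simp: monoidal_nat_iso_def mf_comp_def)
      then show "\<phi> (\<sigma> \<otimes>\<^bsub>G\<^esub> \<tau>) x = \<phi> \<sigma> (\<phi> \<tau> x)" using x oc[OF t x] by (simp add: \<phi>_def)
    qed
    have fmu: "\<forall>\<sigma>\<in>carrier G. \<forall>\<tau>\<in>carrier G. \<forall>u\<in>carrier A. f (\<sigma> \<otimes>\<^bsub>G\<^esub> \<tau>) u = f \<sigma> (f \<tau> u)"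
    proof (intro ballI)
      fix \<sigma> \<tau> u assume s: "\<sigma> \<in> carrier G" and t: "\<tau> \<in> carrier G" and u: "u \<in> carrier A"
      have st: "\<sigma> \<otimes>\<^bsub>G\<^esub> \<tau> \<in> carrier G" using s t by simp
      have thc: "th \<sigma> \<tau> \<one>\<^bsub>P\<^esub> \<in> carrier A"
        using iso[OF s t] by (auto simp: monoidal_nat_iso_def)
      have "th \<sigma> \<tau> \<one>\<^bsub>P\<^esub> \<otimes>\<^bsub>A\<^esub> fmor (mf_comp P A (F \<sigma>) (F \<tau>)) \<one>\<^bsub>P\<^esub> u
          = fmor (F (\<sigma> \<otimes>\<^bsub>G\<^esub> \<tau>)) \<one>\<^bsub>P\<^esub> u \<otimes>\<^bsub>A\<^esub> th \<sigma> \<tau> \<one>\<^bsub>P\<^esub>"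
        using iso[OF s t] u by (auto simp: monoidal_nat_iso_def)
      then have "th \<sigma> \<tau> \<one>\<^bsub>P\<^esub> \<otimes>\<^bsub>A\<^esub> fmor (F \<sigma>) \<one>\<^bsub>P\<^esub> (fmor (F \<tau>) \<one>\<^bsub>P\<^esub> u)
          = th \<sigma> \<tau> \<one>\<^bsub>P\<^esub> \<otimes>\<^bsub>A\<^esub> fmor (F (\<sigma> \<otimes>\<^bsub>G\<^esub> \<tau>)) \<one>\<^bsub>P\<^esub> u"
        using o1[OF t] A.m_comm[OF mc[OF st P.one_closed u] thc] by (simp add: mf_comp_def)
      then have "fmor (F \<sigma>) \<one>\<^bsub>P\<^esub> (fmor (F \<tau>) \<one>\<^bsub>P\<^esub> u) = fmor (F (\<sigma> \<otimes>\<^bsub>G\<^esub> \<tau>)) \<one>\<^bsub>P\<^esub> u"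
        by (rule A.l_cancel) (use thc mc s t st u in auto)
      then show "f (\<sigma> \<otimes>\<^bsub>G\<^esub> \<tau>) u = f \<sigma> (f \<tau> u)" using u mc[OF t P.one_closed u] by (simp add: f_def)
    qed
    show ?thesis
    proof (intro exI conjI ballI)
      show "\<phi> \<in> hom G (AutoGroup P)" by (rule hom_AutoGroupI[OF assms(1) phiaut phimu])
      show "f \<in> hom G (AutoGroup A)" by (rule hom_AutoGroupI[OF assms(1) faut fmu])
      fix \<sigma> x assume s: "\<sigma> \<in> carrier G" and x: "x \<in> carrier P"
      show "fobj (F \<sigma>) x = \<phi> \<sigma> x" using x by (simp add: \<phi>_def)
      fix a assume a: "a \<in> carrier A"
      show "fmor (F \<sigma>) x a = f \<sigma> a"
        using mor_const(1)[OF A P acth mf[OF s] x a] a by (simp add: f_def)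
      show "f \<sigma> (act x a) = act (\<phi> \<sigma> x) (f \<sigma> a)"
        using mor_const(1)[OF A P acth mf[OF s] x actc[OF x a]]
              mor_const(2)[OF A P acth mf[OF s] x a] a x actc[OF x a]
        by (simp add: f_def \<phi>_def)
    qed
  qed
  have partII: "factor_cond_i G P A F"
    if fs: "factor_set_data G P A act \<xi> F th" and c2: "factor_cond_ii G P A F th"
  proof -
    have ae: "monoidal_autoequivalence P A act \<xi> (F \<one>\<^bsub>G\<^esub>)"
      and iso: "monoidal_nat_iso P A act (mf_comp P A (F \<one>\<^bsub>G\<^esub>) (F \<one>\<^bsub>G\<^esub>)) (F \<one>\<^bsub>G\<^esub>) (th \<one>\<^bsub>G\<^esub> \<one>\<^bsub>G\<^esub>)"
      using fs by (auto simp: factor_set_data_def dest: bspec[of _ _ "\<one>\<^bsub>G\<^esub>"])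
    have th1: "\<forall>x\<in>carrier P. th \<one>\<^bsub>G\<^esub> \<one>\<^bsub>G\<^esub> x = \<one>\<^bsub>A\<^esub>"
      using c2 by (simp add: factor_cond_ii_def)
    show ?thesis unfolding factor_cond_i_def
      by (rule partii[OF A P act1 ae iso th1])
  qed
  show ?thesis using partI partII by (auto simp: factor_set_def)
qed

end
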